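(* Assume the scatter-step setting below. Then $$\mathbb{E}\big[\Delta(\theta_1-\eta G_1,\dots,\theta_{h_{ps}}-\eta G_{h_{ps}})\big]\le 6d\eta h_w\sigma'+(1+3d\eta l)\,\Delta(\theta_1,\dots,\theta_{h_{ps}}),$$ where the expectation is over the randomness of the gradient estimates (and anything the received lists depend on).
   Context: Coordinate-wise diameters: $\Delta_i(v_1,\dots,v_h)=\max_{j,k}|v_j[i]-v_k[i]|$, $\Delta=\sum_{i=1}^d\Delta_i$. Minimum–Diameter Averaging: for $f\ge0$, $q\ge2f+1$, $x_1,\dots,x_q\in\mathbb{R}^d$, $\mathrm{MDA}_f(x_1,\dots,x_q)$ is the average of the $x_i$, $i\in I^*$, where $I^*$ is an index set of size $q-f$ minimizing $\max_{i,j\in I}\|x_i-x_j\|_2$ over all $I\subset\{1,\dots,q\}$ with $|I|=q-f$ (ties arbitrary). Scatter-step setting: $L:\mathbb{R}^d\to\mathbb{R}$ differentiable with $l$-Lipschitz gradient; learning rate $\eta>0$; correct server parameters $\theta_1,\dots,\theta_{h_{ps}}\in\mathbb{R}^d$; correct workers' models $x_1,\dots,x_{h_w}\in\mathbb{R}^d$ with $\min_k\theta_k[i]\le x_r[i]\le\max_k\theta_k[i]$ for all coordinates $i$ and all $r$; random gradient estimates $g_1,\dots,g_{h_w}$ with $\mathbb{E}\|g_r-\nabla L(x_r)\|_2\le\sigma'$; integers $f_w\ge1$, $q_w\ge2f_w+1$; each correct server $j$ computes $G_j=\mathrm{MDA}_{f_w}$ of a list of $q_w$ vectors of which at least $q_w-f_w$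 entries belong to $\{g_1,\dots,g_{h_w}\}$ and the others are arbitrary. *)

theory Defs
  imports "HOL-Probability.Probability"
begin

text \<open>The 0 inserted only makes the value 0 for the empty family; for h >= 1 it is the
  maximum max_{j,k} |v_j[i] - v_k[i]| (which is >= 0).\<close>
definition coord_diam :: "nat \<Rightarrow> (nat \<Rightarrow> real^'d) \<Rightarrow> 'd \<Rightarrow> real" where
  "coord_diam h v i = Max (insert 0 {\<bar>v j $ i - v k $ i\<bar> | j k. j < h \<and> k < h})"

definition Delta :: "nat \<Rightarrow> (nat \<Rightarrow> real^'d) \<Rightarrow> real" where
  "Delta h v = (\<Sum>i\<in>UNIV. coord_diam h v i)"

definition idx_diam :: "(real^'d) list \<Rightarrow> nat set \<Rightarrow> real" where
  "idx_diam xs I = Max (insert 0 {norm (xs ! i - xs ! j) | i j. i \<in> I \<and> j \<in> I})"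

text \<open>v is a possible output of MDA_f on the list xs (ties broken arbitrarily).\<close>
definition is_MDA :: "nat \<Rightarrow> (real^'d) list \<Rightarrow> real^'d \<Rightarrow> bool" where
  "is_MDA f xs v \<longleftrightarrow>
     (\<exists>I. I \<subseteq> {..<length xs} \<and> card I = length xs - f \<and>
          (\<forall>J. J \<subseteq> {..<length xs} \<and> card J = length xs - f \<longrightarrow> idx_diam xs I \<le> idx_diam xs J) \<and>
          v = (1 / real (card I)) *\<^sub>R (\<Sum>i\<in>I. xs ! i))"

end

theory Submission
  imports Defs
begin

lemma cd_set_eq: "{\<bar>v j $ i - v k $ i\<bar> | j k. j < h \<and> k < h} = (\<lambda>(j,k). \<bar>v j $ i - v k $ i\<bar>) ` ({..<h}\<times>{..<h})"
  by auto

lemma cd_ge: "j < h \<Longrightarrow> k < h \<Longrightarrow> \<bar>v j $ i - v k $ i\<bar> \<le> coord_diam h v i"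
  unfolding coord_diam_def cd_set_eq by (intro Max_ge) auto

lemma cd_nonneg: "0 \<le> coord_diam h v i"
  unfolding coord_diam_def cd_set_eq by (intro Max_ge) auto

lemma cd_le: "0 \<le> c \<Longrightarrow> (\<And>j k. j < h \<Longrightarrow> k < h \<Longrightarrow> \<bar>v j $ i - v k $ i\<bar> \<le> c) \<Longrightarrow> coord_diam h v i \<le> c"
  unfolding coord_diam_def cd_set_eq by (subst Max_le_iff) auto

lemma Delta_zero: "Delta 0 v = 0"
  unfolding Delta_def coord_diam_def by simp

lemma Delta_nonneg: "0 \<le> Delta h v"
  unfolding Delta_def by (intro sum_nonneg cd_nonneg)

lemma id_set_eq: "{norm (xs ! i - xs ! j) | i j. i \<in> I \<and> j \<in> I} = (\<lambda>(i,j). norm (xs ! i - xs ! j)) ` (I \<times> I)"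
  by auto

lemma id_ge: "finite I \<Longrightarrow> i \<in> I \<Longrightarrow> j \<in> I \<Longrightarrow> norm (xs ! i - xs ! j) \<le> idx_diam xs I"
  unfolding idx_diam_def id_set_eq by (intro Max_ge) auto

lemma id_le: "finite I \<Longrightarrow> 0 \<le> c \<Longrightarrow> (\<And>i j. i \<in> I \<Longrightarrow> j \<in> I \<Longrightarrow> norm (xs ! i - xs ! j) \<le> c) \<Longrightarrow> idx_diam xs I \<le> c"
  unfolding idx_diam_def id_set_eq by (subst Max_le_iff) auto

lemma coord_diam_meas:
  fixes V :: "nat \<Rightarrow> 'w \<Rightarrow> real^'d"
  assumes "\<forall>j<h. V j \<in> borel_measurable M"
  shows "(\<lambda>\<omega>. coord_diam h (\<lambda>j. V j \<omega>) i) \<in> borel_measurable M"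
proof -
  define F where "F = (\<lambda>p \<omega>. case p of None \<Rightarrow> 0 | Some (j,k) \<Rightarrow> \<bar>V j \<omega> $ i - V k \<omega> $ i\<bar>)"
  define P where "P = insert None (Some ` ({..<h}\<times>{..<h}))"
  have eq: "coord_diam h (\<lambda>j. V j \<omega>) i = Max ((\<lambda>p. F p \<omega>) ` P)" for \<omega>
    unfolding coord_diam_def F_def P_def cd_set_eq image_insert image_image by (simp add: case_prod_unfold)
  have "(\<lambda>\<omega>. Max ((\<lambda>p. F p \<omega>) ` P)) \<in> borel_measurable M"
  proof (rule borel_measurable_Max)
    show "finite P" unfolding P_def by simp
    fix p assume "p \<in> P"
    then show "F p \<in> borel_measurable M"
    proof (cases p)
      case None then show ?thesis by (simp add: F_def)
    next
      case (Some a)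
      then obtain j k where a: "p = Some (j,k)" "j < h" "k < h" using \<open>p \<in> P\<close> unfolding P_def by auto
      have mj: "V j \<in> borel_measurable M" "V k \<in> borel_measurable M" using assms a by auto
      have c: "continuous_on UNIV (\<lambda>y::real^'d. y $ i)"
        by (intro linear_continuous_on bounded_linear_vec_nth)
      have "(\<lambda>\<omega>. V j \<omega> $ i) \<in> borel_measurable M" "(\<lambda>\<omega>. V k \<omega> $ i) \<in> borel_measurable M"
        using borel_measurable_continuous_on[OF c] mj by auto
      then have "(\<lambda>\<omega>. \<bar>V j \<omega> $ i - V k \<omega> $ i\<bar>) \<in> borel_measurable M"
        by measurable
      then show ?thesis using a by (simp add: F_def)
    qed
  qed
  then show ?thesis by (simp add: eq)
qed

lemma Delta_meas:
  assumes "\<forall>j<h. V j \<in> borel_measurable M"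
  shows "(\<lambda>\<omega>. Delta h (\<lambda>j. V j \<omega>)) \<in> borel_measurable M"
  unfolding Delta_def by (intro borel_measurable_sum coord_diam_meas assms)

lemma norm3: "norm ((u::'a::real_normed_vector) + v - w) \<le> norm u + norm v + norm w"
  by (metis add_mono norm_triangle_ineq norm_triangle_ineq4 order_trans order_refl)

lemma norm3': "norm ((u::'a::real_normed_vector) - w + v) \<le> norm u + norm w + norm v"
  by (metis add_mono norm_triangle_ineq norm_triangle_ineq4 order_trans order_refl)

lemma MDA_close:
  fixes xs :: "(real^'d) list" and S :: "(real^'d) set"
  assumes len: "length xs = q" and qf: "q \<ge> 2 * f + 1"
    and C: "card {k. k < q \<and> xs ! k \<in> S} \<ge> q - f"
    and B: "0 \<le> B" and SB: "\<forall>a\<in>S. \<forall>b\<in>S. norm (a - b) \<le> B"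
    and M: "is_MDA f xs v"
  shows "\<exists>s\<in>S. norm (v - s) \<le> B"
proof -
  define C where "C = {k. k < q \<and> xs ! k \<in> S}"
  obtain I where I: "I \<subseteq> {..<q}" "card I = q - f"
    and Imin: "\<And>J. J \<subseteq> {..<q} \<Longrightarrow> card J = q - f \<Longrightarrow> idx_diam xs I \<le> idx_diam xs J"
    and v: "v = (1 / real (card I)) *\<^sub>R (\<Sum>i\<in>I. xs ! i)"
    using M len unfolding is_MDA_def by auto
  have finI: "finite I" using I(1) finite_subset by blast
  have Csub: "C \<subseteq> {..<q}" unfolding C_def by auto
  have finC: "finite C" using Csub finite_subset by blast
  obtain J where J: "J \<subseteq> C" "card J = q - f" "finite J"
    using obtain_subset_with_card_n[of "q - f" C] C unfolding C_def by blast
  have "idx_diam xs J \<le> B"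
    by (rule id_le[OF J(3) B]) (use J(1) SB in \<open>auto simp: C_def\<close>)
  then have dI: "idx_diam xs I \<le> B" using Imin[of J] J Csub by force
  have "I \<inter> C \<noteq> {}"
  proof
    assume "I \<inter> C = {}"
    then have "I \<subseteq> {..<q} - C" using I by auto
    then have "card I \<le> card ({..<q} - C)" by (intro card_mono) auto
    also have "\<dots> = q - card C" using Csub by (simp add: card_Diff_subset finC)
    also have "\<dots> \<le> f" using C unfolding C_def by linarith
    finally show False using I(2) qf by linarith
  qed
  then obtain k0 where k0: "k0 \<in> I" "k0 \<in> C" by blast
  define s where "s = xs ! k0"
  have sS: "s \<in> S" using k0 unfolding s_def C_def by auto
  have n0: "card I > 0" using I(2) qf by linarith
  have "v - s = (1 / real (card I)) *\<^sub>R (\<Sum>i\<in>I. xs ! i - s)"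
    using n0 by (simp add: v sum_subtractf scaleR_diff_right sum_constant_scaleR del: sum_constant)
  then have "norm (v - s) = (1 / real (card I)) * norm (\<Sum>i\<in>I. xs ! i - s)"
    by simp
  also have "\<dots> \<le> (1 / real (card I)) * (\<Sum>i\<in>I. norm (xs ! i - s))"
    by (intro mult_left_mono norm_sum) auto
  also have "\<dots> \<le> (1 / real (card I)) * (\<Sum>i\<in>I. B)"
  proof (intro mult_left_mono sum_mono)
    fix i assume "i \<in> I"
    then have "norm (xs ! i - s) \<le> idx_diam xs I" unfolding s_def using id_ge[OF finI] k0 by blast
    then show "norm (xs ! i - s) \<le> B" using dI by linarith
  qed auto
  also have "\<dots> = B" using n0 by simp
  finally show ?thesis using sS by blast
qed

theorem mainTheorem9:
  fixes L :: "real^'d \<Rightarrow> real" and gradL :: "real^'d \<Rightarrow> real^'d"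
    and l \<eta> \<sigma>' :: real
    and h_ps h_w f_w q_w :: nat
    and \<theta> x :: "nat \<Rightarrow> real^'d"
    and M :: "'w measure"
    and g G :: "nat \<Rightarrow> 'w \<Rightarrow> real^'d"
    and lst :: "nat \<Rightarrow> 'w \<Rightarrow> (real^'d) list"
  assumes grad: "\<forall>y. (L has_derivative (\<lambda>h. gradL y \<bullet> h)) (at y)"
    and lip: "\<forall>y z. norm (gradL y - gradL z) \<le> l * norm (y - z)"
    and eta: "\<eta> > 0"
    and x_box: "\<forall>r<h_w. \<forall>i. Min ((\<lambda>k. \<theta> k $ i) ` {..<h_ps}) \<le> x r $ i
                          \<and> x r $ i \<le> Max ((\<lambda>k. \<theta> k $ i) ` {..<h_ps})"
    and P: "prob_space M"
    and g_meas: "\<forall>r<h_w. g r \<in> borel_measurable M"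
    and g_int: "\<forall>r<h_w. integrable M (\<lambda>\<omega>. norm (g r \<omega> - gradL (x r)))"
    and g_err: "\<forall>r<h_w. (\<integral>\<omega>. norm (g r \<omega> - gradL (x r)) \<partial>M) \<le> \<sigma>'"
    and fw: "f_w \<ge> 1" and qw: "q_w \<ge> 2 * f_w + 1"
    and lists: "\<forall>j<h_ps. \<forall>\<omega>\<in>space M. length (lst j \<omega>) = q_w \<and>
                   card {k. k < q_w \<and> lst j \<omega> ! k \<in> (\<lambda>r. g r \<omega>) ` {..<h_w}} \<ge> q_w - f_w"
    and G_MDA: "\<forall>j<h_ps. \<forall>\<omega>\<in>space M. is_MDA f_w (lst j \<omega>) (G j \<omega>)"
    and G_meas: "\<forall>j<h_ps. G j \<in> borel_measurable M"
  shows "integrable M (\<lambda>\<omega>. Delta h_ps (\<lambda>j. \<theta> j - \<eta> *\<^sub>R G j \<omega>)) \<and>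
         (\<integral>\<omega>. Delta h_ps (\<lambda>j. \<theta> j - \<eta> *\<^sub>R G j \<omega>) \<partial>M)
           \<le> 6 * real CARD('d) * \<eta> * real h_w * \<sigma>' + (1 + 3 * real CARD('d) * \<eta> * l) * Delta h_ps \<theta>"
proof -
  interpret P: prob_space M by (rule P)
  let ?d = "real CARD('d)"
  define e where "e = (\<lambda>r \<omega>. norm (g r \<omega> - gradL (x r)))"
  define B where "B = (\<lambda>\<omega>. 2 * (\<Sum>r<h_w. e r \<omega>) + l * Delta h_ps \<theta>)"
  define D where "D = (\<lambda>\<omega>. Delta h_ps (\<lambda>j. \<theta> j - \<eta> *\<^sub>R G j \<omega>))"
  have Dmeas: "D \<in> borel_measurable M"
    unfolding D_def by (rule Delta_meas) (use G_meas in auto)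
  have sig: "0 \<le> \<sigma>'" if "h_w > 0"
  proof -
    have "0 \<le> (\<integral>\<omega>. e 0 \<omega> \<partial>M)" unfolding e_def by (intro integral_nonneg_AE) auto
    then show ?thesis using g_err that unfolding e_def by (meson order_trans)
  qed
  have Dn: "0 \<le> Delta h_ps \<theta>" by (rule Delta_nonneg)
  show ?thesis
  proof (cases "h_ps = 0")
    case True
    have RHS: "0 \<le> 6 * ?d * \<eta> * real h_w * \<sigma>' + (1 + 3 * ?d * \<eta> * l) * Delta h_ps \<theta>"
    proof (cases "h_w = 0")
      case True then show ?thesis using \<open>h_ps = 0\<close> by (simp add: Delta_zero)
    next
      case False then show ?thesis using sig \<open>h_ps = 0\<close> eta by (simp add: Delta_zero)
    qed
    show ?thesis using RHS True by (simp add: Delta_zero)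
  next
    case False
    have l0: "0 \<le> l"
    proof -
      obtain i :: 'd where True by blast
      have nz: "norm (0 - axis i (1::real)) > 0" by (simp add: axis_eq_0_iff)
      have "0 \<le> l * norm (0 - axis i (1::real))" using lip norm_ge_zero order_trans by metis
      then show ?thesis using nz by (simp add: zero_le_mult_iff)
    qed
    have einteg: "\<And>r. r < h_w \<Longrightarrow> integrable M (e r)" using g_int unfolding e_def by auto
    have enn: "\<And>r \<omega>. 0 \<le> e r \<omega>" unfolding e_def by auto
    have B0: "\<And>\<omega>. 0 \<le> B \<omega>" unfolding B_def using enn l0 Dn by (intro add_nonneg_nonneg mult_nonneg_nonneg sum_nonneg) auto
    have xdiff: "norm (x r - x s) \<le> Delta h_ps \<theta>" if "r < h_w" "s < h_w" for r s
    proof -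
      have "norm (x r - x s) \<le> (\<Sum>i\<in>UNIV. \<bar>(x r - x s) $ i\<bar>)" by (rule norm_le_l1_cart)
      also have "\<dots> \<le> (\<Sum>i\<in>UNIV. coord_diam h_ps \<theta> i)"
      proof (rule sum_mono)
        fix i
        have fin: "finite ((\<lambda>k. \<theta> k $ i) ` {..<h_ps})" and ne: "(\<lambda>k. \<theta> k $ i) ` {..<h_ps} \<noteq> {}"
          using False by auto
        obtain a where a: "a < h_ps" "\<theta> a $ i = Min ((\<lambda>k. \<theta> k $ i) ` {..<h_ps})"
          using Min_in[OF fin ne] by auto
        obtain b where b: "b < h_ps" "\<theta> b $ i = Max ((\<lambda>k. \<theta> k $ i) ` {..<h_ps})"
          using Max_in[OF fin ne] by auto
        have "\<bar>\<theta> b $ i - \<theta> a $ i\<bar> \<le> coord_diam h_ps \<theta> i" using cd_ge a b by blast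
        moreover have "x r $ i \<le> \<theta> b $ i" "x s $ i \<le> \<theta> b $ i" "\<theta> a $ i \<le> x r $ i" "\<theta> a $ i \<le> x s $ i"
          using x_box that a b by auto
        ultimately show "\<bar>(x r - x s) $ i\<bar> \<le> coord_diam h_ps \<theta> i" by auto
      qed
      finally show ?thesis unfolding Delta_def .
    qed
    have pw: "D \<omega> \<le> Delta h_ps \<theta> + ?d * \<eta> * 3 * B \<omega>" if \<omega>: "\<omega> \<in> space M" for \<omega>
    proof -
      define S where "S = (\<lambda>r. g r \<omega>) ` {..<h_w}"
      have SB: "\<forall>a\<in>S. \<forall>b\<in>S. norm (a - b) \<le> B \<omega>"
      proof (intro ballI)
        fix a b assume "a \<in> S" "b \<in> S"
        then obtain r s where rs: "r < h_w" "s < h_w" "a = g r \<omega>" "b = g s \<omega>" unfolding S_def by auto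
        have "a - b = (g r \<omega> - gradL (x r)) - (g s \<omega> - gradL (x s)) + (gradL (x r) - gradL (x s))"
          using rs by simp
        then have "norm (a - b) \<le> e r \<omega> + e s \<omega> + norm (gradL (x r) - gradL (x s))"
          unfolding e_def by (metis norm3')
        also have "\<dots> \<le> e r \<omega> + e s \<omega> + l * Delta h_ps \<theta>"
          using lip[rule_format, of "x r" "x s"] xdiff[OF rs(1,2)] l0 mult_left_mono by fastforce
        also have "e r \<omega> \<le> (\<Sum>r<h_w. e r \<omega>)" "e s \<omega> \<le> (\<Sum>r<h_w. e r \<omega>)"
          using rs enn by (auto intro: member_le_sum)
        ultimately show "norm (a - b) \<le> B \<omega>" unfolding B_def by linarith
      qed
      have close: "\<exists>s\<in>S. norm (G j \<omega> - s) \<le> B \<omega>" if "j < h_ps" for j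
        using MDA_close[of "lst j \<omega>" q_w f_w S "B \<omega>" "G j \<omega>"] lists G_MDA that \<omega> qw B0 SB
        unfolding S_def by auto
      have Gd: "norm (G j \<omega> - G k \<omega>) \<le> 3 * B \<omega>" if jk0: "j < h_ps" "k < h_ps" for j k
      proof -
        obtain a where a: "a \<in> S" "norm (G j \<omega> - a) \<le> B \<omega>" using close jk0 by blast
        obtain b where b: "b \<in> S" "norm (G k \<omega> - b) \<le> B \<omega>" using close jk0 by blast
        have "G j \<omega> - G k \<omega> = (G j \<omega> - a) + (a - b) - (G k \<omega> - b)" by simp
        then have "norm (G j \<omega> - G k \<omega>) \<le> norm (G j \<omega> - a) + norm (a - b) + norm (G k \<omega> - b)"
          by (metis norm3)
        then show ?thesis using a b SB by fastforce
      qed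
      have "coord_diam h_ps (\<lambda>j. \<theta> j - \<eta> *\<^sub>R G j \<omega>) i \<le> coord_diam h_ps \<theta> i + \<eta> * 3 * B \<omega>" for i
      proof (rule cd_le)
        show "0 \<le> coord_diam h_ps \<theta> i + \<eta> * 3 * B \<omega>" using cd_nonneg[of h_ps \<theta> i] B0[of \<omega>] eta by (intro add_nonneg_nonneg mult_nonneg_nonneg) auto
        fix j k assume jk: "j < h_ps" "k < h_ps"
        have "\<bar>(G j \<omega> - G k \<omega>) $ i\<bar> \<le> 3 * B \<omega>"
          using component_le_norm_cart Gd[OF jk] order_trans by blast
        then have g1: "\<eta> * \<bar>G j \<omega> $ i - G k \<omega> $ i\<bar> \<le> \<eta> * (3 * B \<omega>)"
          using eta by (intro mult_left_mono) auto
        have "\<bar>(\<theta> j - \<eta> *\<^sub>R G j \<omega>) $ i - (\<theta> k - \<eta> *\<^sub>R G k \<omega>) $ i\<bar>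
              = \<bar>(\<theta> j $ i - \<theta> k $ i) - \<eta> * (G j \<omega> $ i - G k \<omega> $ i)\<bar>"
          by (simp add: algebra_simps)
        also have "\<dots> \<le> \<bar>\<theta> j $ i - \<theta> k $ i\<bar> + \<eta> * \<bar>G j \<omega> $ i - G k \<omega> $ i\<bar>"
          using eta abs_triangle_ineq4[of "\<theta> j $ i - \<theta> k $ i" "\<eta> * (G j \<omega> $ i - G k \<omega> $ i)"] by (simp add: abs_mult)
        also have "\<dots> \<le> coord_diam h_ps \<theta> i + \<eta> * 3 * B \<omega>"
          using cd_ge[OF jk, of \<theta> i] g1 by simp
        finally show "\<bar>(\<theta> j - \<eta> *\<^sub>R G j \<omega>) $ i - (\<theta> k - \<eta> *\<^sub>R G k \<omega>) $ i\<bar>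
              \<le> coord_diam h_ps \<theta> i + \<eta> * 3 * B \<omega>" .
      qed
      then have "D \<omega> \<le> (\<Sum>i\<in>UNIV. coord_diam h_ps \<theta> i + \<eta> * 3 * B \<omega>)"
        unfolding D_def Delta_def by (intro sum_mono) auto
      also have "\<dots> = Delta h_ps \<theta> + ?d * \<eta> * 3 * B \<omega>"
        unfolding Delta_def by (simp add: sum.distrib)
      finally show ?thesis .
    qed
    define F where "F = (\<lambda>\<omega>. Delta h_ps \<theta> + ?d * \<eta> * 3 * B \<omega>)"
    have Bint: "integrable M B" unfolding B_def
      by (intro Bochner_Integration.integrable_add integrable_mult_right Bochner_Integration.integrable_sum einteg P.integrable_const) auto
    have Fint: "integrable M F" unfolding F_def
      by (intro Bochner_Integration.integrable_add integrable_mult_right Bint P.integrable_const)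
    have Dint: "integrable M D"
    proof (rule Bochner_Integration.integrable_bound[OF Fint Dmeas])
      show "AE \<omega> in M. norm (D \<omega>) \<le> norm (F \<omega>)"
      proof (rule AE_I2)
        fix \<omega> assume w: "\<omega> \<in> space M"
        have "0 \<le> D \<omega>" unfolding D_def by (rule Delta_nonneg)
        then show "norm (D \<omega>) \<le> norm (F \<omega>)" using pw[OF w] unfolding F_def by simp
      qed
    qed
    have "(\<integral>\<omega>. D \<omega> \<partial>M) \<le> (\<integral>\<omega>. F \<omega> \<partial>M)"
      using integral_mono[OF Dint Fint] pw unfolding F_def by blast
    also have "(\<integral>\<omega>. F \<omega> \<partial>M) = Delta h_ps \<theta> + ?d * \<eta> * 3 * (2 * (\<Sum>r<h_w. (\<integral>\<omega>. e r \<omega> \<partial>M)) + l * Delta h_ps \<theta>)"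
    proof -
      have si: "integrable M (\<lambda>\<omega>. \<Sum>r<h_w. e r \<omega>)"
        by (intro Bochner_Integration.integrable_sum einteg) auto
      have i1: "(\<integral>\<omega>. (\<Sum>r<h_w. e r \<omega>) \<partial>M) = (\<Sum>r<h_w. (\<integral>\<omega>. e r \<omega> \<partial>M))"
        by (intro Bochner_Integration.integral_sum einteg) auto
      have i2: "(\<integral>\<omega>. B \<omega> \<partial>M) = 2 * (\<Sum>r<h_w. (\<integral>\<omega>. e r \<omega> \<partial>M)) + l * Delta h_ps \<theta>"
        unfolding B_def using si i1 P.prob_space
        by (subst Bochner_Integration.integral_add) (auto intro: P.integrable_const)
      have i3: "(\<integral>\<omega>. F \<omega> \<partial>M) = Delta h_ps \<theta> + ?d * \<eta> * 3 * (\<integral>\<omega>. B \<omega> \<partial>M)"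
        unfolding F_def using Bint P.prob_space
        by (subst Bochner_Integration.integral_add) (auto intro: P.integrable_const)
      show ?thesis using i2 i3 by simp
    qed
    also have "(\<Sum>r<h_w. (\<integral>\<omega>. e r \<omega> \<partial>M)) \<le> (\<Sum>r<h_w. \<sigma>')"
      using g_err unfolding e_def by (intro sum_mono) auto
    finally have "(\<integral>\<omega>. D \<omega> \<partial>M) \<le> Delta h_ps \<theta> + ?d * \<eta> * 3 * (2 * (real h_w * \<sigma>') + l * Delta h_ps \<theta>)"
      using eta by (simp add: mult_left_mono)
    then have "(\<integral>\<omega>. D \<omega> \<partial>M) \<le> 6 * ?d * \<eta> * real h_w * \<sigma>' + (1 + 3 * ?d * \<eta> * l) * Delta h_ps \<theta>"
      by (simp add: algebra_simps)
    then show ?thesis using Dint unfolding D_def by simp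
  qed
qed

end
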